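(* Let $H:\mathbb{R}^{2m}\to\mathbb{R}$ be smooth and let $\bar y\in\mathbb{R}^{2m}$ be such that $F'=SH_{yy}(\bar y)$ is invertible. Consider the scheme $$y_{n+1}-y_n=\theta_n\,S\,\bar\nabla_sH(y_n,y_{n+1}),\qquad \theta_n=2(F')^{-1}\tanh\frac{h_nF'}{2}.$$ This scheme preserves the energy exactly: $H(y_{n+1})=H(y_n)$.
   Context: Notation: - $y=(x,p)\in\mathbb{R}^{2m}$, $y_n=(x_n,p_n)$, and $h_n$ is the time step. - $S=\begin{pmatrix}0&1\\-1&0\end{pmatrix}$ with $m\times m$ blocks. - $H_{yy}$ is the Hessian of $H$, so $F'=\begin{pmatrix}H_{px}&H_{pp}\\ -H_{xx}&-H_{xp}\end{pmatrix}$ at $\bar y$. $\bar\nabla_sH(y_n,y_{n+1})=\tfrac12\big(\bar\nabla H(y_n,y_{n+1})+\bar\nabla H(y_{n+1},y_n)\big)$ is the symmetrized coordinate increment discrete gradient, where $\bar\nabla H$ has components $$\frac{\Delta H}{\Delta y^j}=\frac{H(\hat y^j_n)-H(\hat y^{j-1}_n)}{y^j_{n+1}-y^j_n},\qquad \hat y^j_n=(y^1_{n+1},\dots,y^j_{n+1},y^{j+1}_n,\dots,y^{2m}_n),$$ with the partial derivative as limit when $y^j_{n+1}=y^j_n$. *)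

theory Defs
  imports "HOL-Analysis.Analysis"
begin

text \<open>Phase space R^{2m} is modelled as real^('m bit0): the index type 'm bit0 has
  exactly 2m elements, linearly ordered via Rep_bit0 into {0..<2m}. Indices with
  Rep_bit0 i < m are the x-coordinates, the others the p-coordinates.\<close>

text \<open>The symplectic matrix S = [[0, 1], [-1, 0]] with m x m blocks.\<close>
definition symp_S :: "real^('m::finite bit0)^('m bit0)" where
  "symp_S = (\<chi> i j. let m = int CARD('m) in
      if Rep_bit0 i < m \<and> Rep_bit0 j = Rep_bit0 i + m then 1
      else if m \<le> Rep_bit0 i \<and> Rep_bit0 j = Rep_bit0 i - m then -1
      else 0)"

definition partial :: "(real^'n::finite \<Rightarrow> real) \<Rightarrow> 'n \<Rightarrow> real^'n \<Rightarrow> real" where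
  "partial f j x = deriv (\<lambda>t. f (x + t *\<^sub>R axis j 1)) 0"

text \<open>Smoothness (C-infinity): f is continuous and every partial derivative exists
  everywhere and is again smooth (coinductively: continuous partials of all orders).\<close>
coinductive smooth_fun :: "(real^'n::finite \<Rightarrow> real) \<Rightarrow> bool" where
  "continuous_on UNIV f \<Longrightarrow>
   (\<And>j. (\<forall>x. (\<lambda>t. f (x + t *\<^sub>R axis j 1)) differentiable (at 0)) \<and>
         smooth_fun (partial f j)) \<Longrightarrow> smooth_fun f"

definition hessian :: "(real^'n::finite \<Rightarrow> real) \<Rightarrow> real^'n \<Rightarrow> real^'n^'n" where
  "hessian f x = (\<chi> i j. partial (partial f j) i x)"

fun mat_pow :: "real^'n::finite^'n \<Rightarrow> nat \<Rightarrow> real^'n^'n" where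
  "mat_pow A 0 = mat 1"
| "mat_pow A (Suc k) = A ** mat_pow A k"

definition mat_exp :: "real^'n::finite^'n \<Rightarrow> real^'n^'n" where
  "mat_exp A = (\<Sum>k. (1 / fact k) *\<^sub>R mat_pow A k)"

definition mat_tanh :: "real^'n::finite^'n \<Rightarrow> real^'n^'n" where
  "mat_tanh A = (mat_exp A - mat_exp (- A)) ** matrix_inv (mat_exp A + mat_exp (- A))"

text \<open>Coordinate increment discrete gradient (Itoh-Abe), coordinates ordered by the
  linear order of the index type.\<close>
definition hat_le :: "(real, 'n::{finite,linorder}) vec \<Rightarrow> (real, 'n) vec \<Rightarrow> 'n \<Rightarrow> (real, 'n) vec" where
  "hat_le y0 y1 j = (\<chi> i. if i \<le> j then y1 $ i else y0 $ i)"

definition hat_lt :: "(real, 'n::{finite,linorder}) vec \<Rightarrow> (real, 'n) vec \<Rightarrow> 'n \<Rightarrow> (real, 'n) vec" where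
  "hat_lt y0 y1 j = (\<chi> i. if i < j then y1 $ i else y0 $ i)"

definition coord_dgrad :: "((real, 'n::{finite,linorder}) vec \<Rightarrow> real) \<Rightarrow> (real, 'n) vec \<Rightarrow> (real, 'n) vec \<Rightarrow> (real, 'n) vec" where
  "coord_dgrad H y0 y1 = (\<chi> j.
     if y1 $ j \<noteq> y0 $ j
     then (H (hat_le y0 y1 j) - H (hat_lt y0 y1 j)) / (y1 $ j - y0 $ j)
     else partial H j (hat_lt y0 y1 j))"

definition sym_dgrad :: "((real, 'n::{finite,linorder}) vec \<Rightarrow> real) \<Rightarrow> (real, 'n) vec \<Rightarrow> (real, 'n) vec \<Rightarrow> (real, 'n) vec" where
  "sym_dgrad H y0 y1 = (1/2) *\<^sub>R (coord_dgrad H y0 y1 + coord_dgrad H y1 y0)"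

end

theory Submission
  imports Defs
begin


lemma mm_add_r: "((A::real^'n::finite^'n) + B) ** C = A ** C + B ** C"
  by (simp add: vec_eq_iff matrix_matrix_mult_def sum.distrib distrib_right)
lemma mm_diff_r: "((A::real^'n::finite^'n) - B) ** C = A ** C - B ** C"
  by (simp add: vec_eq_iff matrix_matrix_mult_def sum_subtractf left_diff_distrib)
lemma mm_diff_l: "(C::real^'n::finite^'n) ** (A - B) = C ** A - C ** B"
  by (simp add: vec_eq_iff matrix_matrix_mult_def sum_subtractf right_diff_distrib)
lemma mm_neg_r: "(- (A::real^'n::finite^'n)) ** C = - (A ** C)"
  by (simp add: vec_eq_iff matrix_matrix_mult_def sum_negf)
lemma mm_neg_l: "(C::real^'n::finite^'n) ** (- A) = - (C ** A)"
  by (simp add: vec_eq_iff matrix_matrix_mult_def sum_negf)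
lemma mm_scaleR_r: "(c *\<^sub>R (A::real^'n::finite^'n)) ** C = c *\<^sub>R (A ** C)"
  by (simp add: vec_eq_iff matrix_matrix_mult_def sum_distrib_left mult.assoc)
lemma mm_scaleR_l: "(C::real^'n::finite^'n) ** (c *\<^sub>R A) = c *\<^sub>R (C ** A)"
  by (simp add: vec_eq_iff matrix_matrix_mult_def sum_distrib_left algebra_simps)
lemma tr_add: "transpose ((A::real^'n::finite^'n) + B) = transpose A + transpose B"
  by (simp add: vec_eq_iff transpose_def)
lemma tr_diff: "transpose ((A::real^'n::finite^'n) - B) = transpose A - transpose B"
  by (simp add: vec_eq_iff transpose_def)
lemma tr_neg: "transpose (- (A::real^'n::finite^'n)) = - transpose A"
  by (simp add: vec_eq_iff transpose_def)

lemma linear_mml: "linear (\<lambda>M::real^'n::finite^'n. (F::real^'n^'n) ** M)"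
  by (rule linearI) (simp_all add: matrix_add_ldistrib mm_scaleR_l)
lemma linear_mmr: "linear (\<lambda>M::real^'n::finite^'n. M ** (F::real^'n^'n))"
  by (rule linearI) (simp_all add: mm_add_r mm_scaleR_r)
lemma linear_tr: "linear (transpose :: real^'n::finite^'n \<Rightarrow> _)"
  by (rule linearI) (simp_all add: tr_add transpose_scalar)

lemma inv_props: assumes "invertible (A::real^'n::finite^'n)"
  shows "A ** matrix_inv A = mat 1" "matrix_inv A ** A = mat 1"
proof -
  have "\<exists>A'. A ** A' = mat 1 \<and> A' ** A = mat 1" using assms invertible_def by blast
  hence "A ** matrix_inv A = mat 1 \<and> matrix_inv A ** A = mat 1"
    unfolding matrix_inv_def by (rule someI_ex)
  thus "A ** matrix_inv A = mat 1" "matrix_inv A ** A = mat 1" by auto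
qed

lemma inv_unique: assumes "(A::real^'n::finite^'n) ** B = mat 1" shows "matrix_inv A = B"
proof -
  have i: "invertible A" using assms invertible_right_inverse by blast
  have "matrix_inv A = (matrix_inv A ** A) ** B" using inv_props(2)[OF i] assms
    by (metis matrix_mul_assoc matrix_mul_rid)
  thus ?thesis using inv_props(2)[OF i] by simp
qed

lemma inv_comm: assumes "invertible (B::real^'n::finite^'n)" "A ** B = B ** A"
  shows "matrix_inv B ** A = A ** matrix_inv B"
proof -
  have "matrix_inv B ** A = matrix_inv B ** A ** (B ** matrix_inv B)" by (simp add: inv_props[OF assms(1)])
  also have "\<dots> = matrix_inv B ** (A ** B) ** matrix_inv B" by (simp add: matrix_mul_assoc)
  also have "\<dots> = matrix_inv B ** (B ** A) ** matrix_inv B" using assms(2) by simp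
  also have "\<dots> = (matrix_inv B ** B) ** A ** matrix_inv B" by (simp add: matrix_mul_assoc)
  also have "\<dots> = A ** matrix_inv B" by (simp add: inv_props[OF assms(1)])
  finally show ?thesis .
qed

lemma mat_pow_comm: "mat_pow A k ** A = A ** mat_pow A k"
  by (induction k) (simp_all, metis matrix_mul_assoc)

lemma mat_pow_comm2: "F ** A = A ** F \<Longrightarrow> F ** mat_pow A k = mat_pow A k ** F"
  by (induction k) (simp_all add: matrix_mul_assoc, metis matrix_mul_assoc)

lemma mat_pow_entry: "\<bar>mat_pow (A::real^'n::finite^'n) k $ i $ j\<bar> \<le> (\<Sum>a\<in>UNIV. \<Sum>b\<in>UNIV. \<bar>A $ a $ b\<bar>) ^ k"
proof (induction k arbitrary: i j)
  case 0 show ?case by (simp add: mat_def)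
next
  case (Suc k)
  let ?c = "\<Sum>a\<in>UNIV. \<Sum>b\<in>UNIV. \<bar>A $ a $ b\<bar>"
  have "\<bar>mat_pow A (Suc k) $ i $ j\<bar> = \<bar>\<Sum>l\<in>UNIV. A $ i $ l * mat_pow A k $ l $ j\<bar>"
    by (simp add: matrix_matrix_mult_def)
  also have "\<dots> \<le> (\<Sum>l\<in>UNIV. \<bar>A $ i $ l\<bar> * ?c ^ k)"
    by (rule order_trans[OF sum_abs], rule sum_mono) (simp add: abs_mult Suc mult_left_mono)
  also have "\<dots> = (\<Sum>l\<in>UNIV. \<bar>A $ i $ l\<bar>) * ?c ^ k" by (simp add: sum_distrib_right)
  also have "\<dots> \<le> ?c * ?c ^ k"
    by (rule mult_right_mono) (rule member_le_sum[of i UNIV "\<lambda>a. \<Sum>b\<in>UNIV. \<bar>A $ a $ b\<bar>"], auto simp: sum_nonneg)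
  finally show ?case by simp
qed

lemma summable_vecI: assumes "\<And>i. summable (\<lambda>k. f k $ i)"
  shows "summable (f :: nat \<Rightarrow> 'a::real_normed_vector^'n::finite)"
proof -
  have "(\<lambda>n. \<Sum>k<n. f k) \<longlonglongrightarrow> (\<chi> i. \<Sum>k. f k $ i)"
  proof (rule vec_tendstoI)
    fix i
    have "(\<lambda>n. \<Sum>k<n. f k $ i) \<longlonglongrightarrow> (\<Sum>k. f k $ i)"
      using assms[of i] by (simp add: summable_LIMSEQ)
    thus "((\<lambda>n. (\<Sum>k<n. f k) $ i) \<longlongrightarrow> (\<chi> i. \<Sum>k. f k $ i) $ i) sequentially"
      by simp
  qed
  thus ?thesis unfolding summable_def sums_def by blast
qed

lemma summable_exp_series: "summable (\<lambda>k. (1 / fact k) *\<^sub>R mat_pow (A::real^'n::finite^'n) k)"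
proof (rule summable_vecI, rule summable_vecI)
  fix i j
  let ?c = "\<Sum>a\<in>UNIV. \<Sum>b\<in>UNIV. \<bar>A $ a $ b\<bar>"
  show "summable (\<lambda>k. ((1 / fact k) *\<^sub>R mat_pow A k) $ i $ j)"
  proof (rule summable_comparison_test'[OF summable_exp[of ?c]])
    fix n :: nat
    show "norm (((1 / fact n) *\<^sub>R mat_pow A n) $ i $ j) \<le> inverse (fact n) * ?c ^ n"
      using mat_pow_entry[of A n i j] by (simp add: divide_right_mono field_simps)
  qed
qed

lemma bl_mat_exp: assumes "linear (L :: real^'n::finite^'n \<Rightarrow> real^'n^'n)"
  shows "L (mat_exp A) = (\<Sum>k. (1 / fact k) *\<^sub>R L (mat_pow A k))"
proof -
  have "bounded_linear L" using assms linear_conv_bounded_linear by blast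
  hence "L (mat_exp A) = (\<Sum>k. L ((1 / fact k) *\<^sub>R mat_pow A k))"
    unfolding mat_exp_def using bounded_linear.suminf summable_exp_series by blast
  thus ?thesis using assms by (simp add: linear_scale)
qed

lemma mat_exp_comm: assumes "F ** A = A ** (F::real^'n::finite^'n)"
  shows "F ** mat_exp A = mat_exp A ** F"
  using bl_mat_exp[OF linear_mml[of F], of A] bl_mat_exp[OF linear_mmr[of F], of A]
    mat_pow_comm2[OF assms] by simp



definition tau :: "int \<Rightarrow> int \<Rightarrow> int" where "tau m r = (if r < m then r + m else r - m)"
definition sg :: "int \<Rightarrow> int \<Rightarrow> real" where "sg m r = (if r < m then 1 else -1)"

lemma Rep_range: "0 \<le> Rep_bit0 (x::'m::finite bit0) \<and> Rep_bit0 x < 2 * int CARD('m)"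
  using Rep_bit0[of x] by auto

lemma S_entry: "(symp_S :: real^('m::finite bit0)^('m bit0)) $ i $ j =
   (if j = Abs_bit0 (tau (int CARD('m)) (Rep_bit0 i)) then sg (int CARD('m)) (Rep_bit0 i) else 0)"
proof -
  let ?m = "int CARD('m)"
  have r: "0 \<le> tau ?m (Rep_bit0 i) \<and> tau ?m (Rep_bit0 i) < 2 * ?m"
    using Rep_range[of i] by (auto simp: tau_def)
  have "j = Abs_bit0 (tau ?m (Rep_bit0 i)) \<longleftrightarrow> Rep_bit0 j = tau ?m (Rep_bit0 i)"
    using r Abs_bit0_inverse[of "tau ?m (Rep_bit0 i)"] Rep_bit0_inverse[of j] by auto
  thus ?thesis using Rep_range[of i]
    by (auto simp: symp_S_def tau_def sg_def Let_def)
qed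

lemma Rep_Abs_tau: "Rep_bit0 (Abs_bit0 (tau (int CARD('m)) (Rep_bit0 (i::'m::finite bit0))) :: 'm bit0)
   = tau (int CARD('m)) (Rep_bit0 i)"
  using Rep_range[of i] by (intro Abs_bit0_inverse) (auto simp: tau_def)

lemma S_sq: "(symp_S :: real^('m::finite bit0)^('m bit0)) ** symp_S = - mat 1"
proof -
  let ?m = "int CARD('m)"
  have "\<And>i k. (symp_S ** symp_S :: real^('m bit0)^('m bit0)) $ i $ k = - (mat 1 $ i $ k)"
  proof -
    fix i k :: "'m bit0"
    let ?j = "Abs_bit0 (tau ?m (Rep_bit0 i)) :: 'm bit0"
    have "(symp_S ** symp_S :: real^('m bit0)^('m bit0)) $ i $ k = sg ?m (Rep_bit0 i) * symp_S $ ?j $ k"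
    proof -
      have "\<And>j. (symp_S :: real^('m bit0)^('m bit0)) $ i $ j * symp_S $ j $ k
              = (if j = ?j then sg ?m (Rep_bit0 i) * symp_S $ ?j $ k else 0)"
        by (subst S_entry[of i]) simp
      hence "(symp_S ** symp_S :: real^('m bit0)^('m bit0)) $ i $ k
          = (\<Sum>j\<in>UNIV. if j = ?j then sg ?m (Rep_bit0 i) * symp_S $ ?j $ k else 0)"
        unfolding matrix_matrix_mult_def by simp
      thus ?thesis by simp
    qed
    also have "\<dots> = - (mat 1 $ i $ k)"
    proof -
      have e: "k = Abs_bit0 (tau ?m (Rep_bit0 ?j)) \<longleftrightarrow> k = i"
      proof -
        have "tau ?m (Rep_bit0 ?j) = Rep_bit0 i" using Rep_range[of i]
          by (simp add: Rep_Abs_tau) (auto simp: tau_def)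
        thus ?thesis by (simp add: Rep_bit0_inverse)
      qed
      show ?thesis using Rep_range[of i]
        by (simp add: S_entry[of ?j] e Rep_Abs_tau mat_def) (auto simp: sg_def tau_def Rep_bit0_inverse)
    qed
    finally show "(symp_S ** symp_S :: real^('m bit0)^('m bit0)) $ i $ k = - (mat 1 $ i $ k)" .
  qed
  thus ?thesis by (simp add: vec_eq_iff)
qed

lemma S_int: fixes a b m :: int
  assumes "0 \<le> a" "a < 2*m" "0 \<le> b" "b < 2*m"
  shows "((if a < m \<and> b = a + m then 1 else if m \<le> a \<and> b = a - m then -1 else 0)::real)
   = - (if b < m \<and> a = b + m then 1 else if m \<le> b \<and> a = b - m then -1 else 0)"
  using assms by auto


lemma S_def2: "(symp_S :: real^('m::finite bit0)^('m bit0)) $ i $ j =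
  (if Rep_bit0 i < int CARD('m) \<and> Rep_bit0 j = Rep_bit0 i + int CARD('m) then 1
   else if int CARD('m) \<le> Rep_bit0 i \<and> Rep_bit0 j = Rep_bit0 i - int CARD('m) then -1 else 0)"
  unfolding symp_S_def Let_def by simp

lemma S_tr: "transpose (symp_S :: real^('m::finite bit0)^('m bit0)) = - symp_S"
proof -
  have e: "\<And>i j. (symp_S :: real^('m bit0)^('m bit0)) $ j $ i = - (symp_S $ i $ j)"
  proof -
    fix i j :: "'m bit0"
    have r: "0 \<le> Rep_bit0 i" "Rep_bit0 i < 2 * int CARD('m)" "0 \<le> Rep_bit0 j" "Rep_bit0 j < 2 * int CARD('m)"
      using Rep_range[of i] Rep_range[of j] by auto
    show "(symp_S :: real^('m bit0)^('m bit0)) $ j $ i = - (symp_S $ i $ j)"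
      unfolding S_def2 using S_int[OF r(3,4,1,2)] .
  qed
  have "\<And>i j. transpose (symp_S :: real^('m bit0)^('m bit0)) $ i $ j = (- symp_S) $ i $ j"
    unfolding transpose_def vec_lambda_beta uminus_vec_def by (rule e)
  thus ?thesis by (simp add: vec_eq_iff del: transpose_def)
qed


definition sh :: "real^'n::finite^'n \<Rightarrow> real^'n^'n \<Rightarrow> real^'n^'n" where
  "sh S X = - (S ** transpose X ** S)"

locale sympl = fixes S :: "real^'n::finite^'n"
  assumes SS: "S ** S = - mat 1" and ST: "transpose S = - S"
begin

lemma sh_mul: "sh S (X ** Y) = sh S Y ** sh S X"
proof -
  have "sh S Y ** sh S X = S ** transpose Y ** (S ** S) ** transpose X ** S"
    by (simp add: sh_def mm_neg_r mm_neg_l matrix_mul_assoc)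
  also have "\<dots> = - (S ** (transpose Y ** transpose X) ** S)"
    by (simp add: SS mm_neg_r mm_neg_l matrix_mul_assoc)
  finally show ?thesis by (simp add: sh_def matrix_transpose_mul)
qed

lemma sh_one: "sh S (mat 1) = mat 1"
  by (simp add: sh_def SS)

lemma linear_sh: "linear (sh S)"
proof (rule linearI)
  fix X Y :: "real^'n^'n" and c :: real
  show "sh S (X + Y) = sh S X + sh S Y"
    by (simp add: sh_def tr_add matrix_add_ldistrib mm_add_r)
  show "sh S (c *\<^sub>R X) = c *\<^sub>R sh S X"
    by (simp add: sh_def transpose_scalar mm_scaleR_l mm_scaleR_r)
qed

lemma sh_add: "sh S (X + Y) = sh S X + sh S Y" using linear_sh by (simp add: linear_add)
lemma sh_diff: "sh S (X - Y) = sh S X - sh S Y" using linear_sh by (simp add: linear_diff)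
lemma sh_neg: "sh S (- X) = - sh S X" using linear_sh by (simp add: linear_neg)
lemma sh_scale: "sh S (c *\<^sub>R X) = c *\<^sub>R sh S X" using linear_sh by (simp add: linear_scale)

lemma sh_pow: "sh S (mat_pow X k) = mat_pow (sh S X) k"
  by (induction k) (simp_all add: sh_one sh_mul mat_pow_comm)

lemma sh_exp: "sh S (mat_exp X) = mat_exp (sh S X)"
  using bl_mat_exp[OF linear_sh, of X] by (simp add: sh_pow mat_exp_def)

lemma sh_inv: assumes "invertible X" shows "sh S (matrix_inv X) = matrix_inv (sh S X)"
proof -
  have "sh S X ** sh S (matrix_inv X) = mat 1"
    using sh_mul[of "matrix_inv X" X, symmetric] by (simp add: inv_props[OF assms] sh_one)
  thus ?thesis by (simp add: inv_unique)
qed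

lemma sh_skew: assumes "sh S T = T" shows "transpose (T ** S) = - (T ** S)"
proof -
  have "- (S ** transpose T ** S) ** S = T ** S" using assms by (simp add: sh_def)
  hence "S ** transpose T = T ** S"
    by (simp add: mm_neg_r matrix_mul_assoc[symmetric] SS mm_neg_l)
  thus ?thesis by (simp add: matrix_transpose_mul ST mm_neg_r)
qed

lemma sh_F: assumes "transpose A = A" shows "sh S (S ** A) = - (S ** A)"
proof -
  have "sh S (S ** A) = - (S ** (A ** (- S)) ** S)"
    by (simp add: sh_def matrix_transpose_mul assms ST)
  also have "\<dots> = - (S ** A)"
    by (simp add: mm_neg_l mm_neg_r matrix_mul_assoc[symmetric] SS)
  finally show ?thesis .
qed

lemma main_alg:
  assumes A: "transpose A = A"
    and iF: "invertible (S ** A)"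
    and iP: "invertible (mat_exp ((h/2) *\<^sub>R (S ** A)) + mat_exp (- ((h/2) *\<^sub>R (S ** A))))"
  defines "\<theta> \<equiv> (2::real) *\<^sub>R (matrix_inv (S ** A) ** mat_tanh ((h/2) *\<^sub>R (S ** A)))"
  shows "transpose (\<theta> ** S) = - (\<theta> ** S)"
proof -
  define F where "F = S ** A"
  define G where "G = (h/2) *\<^sub>R F"
  define E where "E = mat_exp G"
  define E' where "E' = mat_exp (- G)"
  define D where "D = E - E'"
  define P where "P = E + E'"
  have iF': "invertible F" using iF F_def by simp
  have iP': "invertible P" using iP by (simp add: P_def E_def E'_def G_def F_def)
  have th: "\<theta> = 2 *\<^sub>R (matrix_inv F ** (D ** matrix_inv P))"
    by (simp add: \<theta>_def mat_tanh_def F_def G_def D_def P_def E_def E'_def)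
  have shG: "sh S G = - G" using sh_F[OF A] by (simp add: G_def F_def sh_scale)
  have shE: "sh S E = E'" by (simp add: E_def E'_def sh_exp shG)
  have shE': "sh S E' = E" by (simp add: E_def E'_def sh_exp sh_neg shG)
  have shD: "sh S D = - D" by (simp add: D_def sh_diff shE shE')
  have shP: "sh S P = P" by (simp add: P_def sh_add shE shE' add.commute)
  have shiP: "sh S (matrix_inv P) = matrix_inv P" using sh_inv[OF iP'] shP by simp
  have shF: "sh S F = - F" using sh_F[OF A] F_def by simp
  have iFn: "matrix_inv (- F) = - matrix_inv F"
    by (rule inv_unique) (simp add: mm_neg_r mm_neg_l inv_props[OF iF'])
  have shiF: "sh S (matrix_inv F) = - matrix_inv F" using sh_inv[OF iF'] shF iFn by simp
  have FG: "F ** G = G ** F" by (simp add: G_def mm_scaleR_l mm_scaleR_r)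
  have FnG: "F ** (- G) = (- G) ** F" using FG by (simp add: mm_neg_l mm_neg_r)
  have FE: "F ** E = E ** F" using mat_exp_comm[OF FG] E_def by simp
  have FE': "F ** E' = E' ** F" using mat_exp_comm[OF FnG] E'_def by simp
  have GE: "G ** E = E ** G" using mat_exp_comm[of G G] E_def by simp
  have nGE: "(- G) ** E = E ** (- G)" using GE by (simp add: mm_neg_l mm_neg_r)
  have EE': "E ** E' = E' ** E" using mat_exp_comm[OF nGE[symmetric]] E'_def by simp
  have DP: "D ** P = P ** D"
    by (simp add: D_def P_def mm_add_r mm_diff_r matrix_add_ldistrib mm_diff_l EE')
  have FD: "F ** D = D ** F" by (simp add: D_def mm_diff_r mm_diff_l FE FE')
  have FP: "F ** P = P ** F" by (simp add: P_def mm_add_r matrix_add_ldistrib FE FE')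
  have iPD: "matrix_inv P ** D = D ** matrix_inv P" using inv_comm[OF iP' DP] .
  have iFD: "matrix_inv F ** D = D ** matrix_inv F" using inv_comm[OF iF' FD[symmetric]] by simp
  have iFP: "matrix_inv F ** P = P ** matrix_inv F" using inv_comm[OF iF' FP[symmetric]] by simp
  have iFiP: "matrix_inv P ** matrix_inv F = matrix_inv F ** matrix_inv P"
    using inv_comm[OF iP' iFP] by simp
  have "sh S \<theta> = 2 *\<^sub>R (matrix_inv P ** (- D) ** (- matrix_inv F))"
    by (simp add: th sh_scale sh_mul shD shiP shiF)
  also have "\<dots> = 2 *\<^sub>R (matrix_inv P ** D ** matrix_inv F)"
    by (simp add: mm_neg_l mm_neg_r)
  also have "\<dots> = 2 *\<^sub>R (matrix_inv F ** (D ** matrix_inv P))"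
    by (metis iPD iFD iFiP matrix_mul_assoc)
  finally have "sh S \<theta> = \<theta>" using th by simp
  thus ?thesis by (rule sh_skew)
qed

end


definition PP :: "(real, 'n::finite) vec \<Rightarrow> (real, 'n) vec \<Rightarrow> 'n set \<Rightarrow> (real, 'n) vec" where
  "PP y0 y1 A = (\<chi> i. if i \<in> A then y1 $ i else y0 $ i)"

lemma tele_gen:
  fixes H :: "(real, 'n::{finite,linorder}) vec \<Rightarrow> real"
  assumes "finite A"
  shows "(\<Sum>j\<in>A. H (PP y0 y1 (A \<inter> {..j})) - H (PP y0 y1 (A \<inter> {..<j}))) = H (PP y0 y1 A) - H (PP y0 y1 {})"
  using assms
proof (induction A rule: finite_linorder_max_induct)
  case empty show ?case by simp
next
  case (insert b A)
  have s: "(\<Sum>j\<in>A. H (PP y0 y1 (insert b A \<inter> {..j})) - H (PP y0 y1 (insert b A \<inter> {..<j})))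
        = (\<Sum>j\<in>A. H (PP y0 y1 (A \<inter> {..j})) - H (PP y0 y1 (A \<inter> {..<j})))"
  proof (rule sum.cong)
    fix j assume "j \<in> A"
    hence "j < b" using insert by auto
    hence "insert b A \<inter> {..j} = A \<inter> {..j}" "insert b A \<inter> {..<j} = A \<inter> {..<j}" by auto
    thus "H (PP y0 y1 (insert b A \<inter> {..j})) - H (PP y0 y1 (insert b A \<inter> {..<j}))
        = H (PP y0 y1 (A \<inter> {..j})) - H (PP y0 y1 (A \<inter> {..<j}))" by simp
  qed simp
  have b1: "insert b A \<inter> {..b} = insert b A" using insert by auto
  have b2: "insert b A \<inter> {..<b} = A" using insert by auto
  have bA: "b \<notin> A" using insert by auto
  show ?case using insert bA by (simp add: s b1 b2)
qed

lemma tele: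
  fixes H :: "(real, 'n::{finite,linorder}) vec \<Rightarrow> real"
  shows "(\<Sum>j\<in>UNIV. H (hat_le y0 y1 j) - H (hat_lt y0 y1 j)) = H y1 - H y0"
proof -
  have "\<And>j. hat_le y0 y1 j = PP y0 y1 (UNIV \<inter> {..j})" "\<And>j. hat_lt y0 y1 j = PP y0 y1 (UNIV \<inter> {..<j})"
    by (simp_all add: hat_le_def hat_lt_def PP_def)
  moreover have "PP y0 y1 UNIV = y1" "PP y0 y1 {} = y0" by (simp_all add: PP_def vec_eq_iff)
  ultimately show ?thesis using tele_gen[of UNIV H y0 y1] by simp
qed

lemma cdg_inner:
  fixes H :: "(real, 'n::{finite,linorder}) vec \<Rightarrow> real"
  shows "coord_dgrad H y0 y1 \<bullet> (y1 - y0) = H y1 - H y0"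
proof -
  have "\<And>j. coord_dgrad H y0 y1 $ j * (y1 - y0) $ j = H (hat_le y0 y1 j) - H (hat_lt y0 y1 j)"
  proof -
    fix j
    show "coord_dgrad H y0 y1 $ j * (y1 - y0) $ j = H (hat_le y0 y1 j) - H (hat_lt y0 y1 j)"
    proof (cases "y1 $ j = y0 $ j")
      case True
      hence "hat_le y0 y1 j = hat_lt y0 y1 j"
        by (auto simp: hat_le_def hat_lt_def vec_eq_iff)
      thus ?thesis using True by simp
    next
      case False thus ?thesis by (simp add: coord_dgrad_def)
    qed
  qed
  thus ?thesis by (simp add: inner_vec_def tele)
qed

lemma sdg_inner:
  fixes H :: "(real, 'n::{finite,linorder}) vec \<Rightarrow> real"
  shows "sym_dgrad H y0 y1 \<bullet> (y1 - y0) = H y1 - H y0"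
proof -
  have "coord_dgrad H y1 y0 \<bullet> (y1 - y0) = - (coord_dgrad H y1 y0 \<bullet> (y0 - y1))"
    by (simp add: inner_diff_right)
  hence "coord_dgrad H y1 y0 \<bullet> (y1 - y0) = H y1 - H y0" using cdg_inner[of H y1 y0] by simp
  thus ?thesis using cdg_inner[of H y0 y1] by (simp add: sym_dgrad_def inner_add_left)
qed


lemma sm1: "smooth_fun f \<Longrightarrow> continuous_on UNIV f"
  by (erule smooth_fun.cases) simp
lemma sm2: "smooth_fun f \<Longrightarrow> (\<lambda>t. f (x + t *\<^sub>R axis j 1)) differentiable (at 0)"
  by (erule smooth_fun.cases) blast
lemma sm3: "smooth_fun f \<Longrightarrow> smooth_fun (partial f j)"
  by (erule smooth_fun.cases) blast

lemma dir_deriv: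
  assumes "smooth_fun (f :: real^'n::finite \<Rightarrow> real)"
  shows "((\<lambda>t. f (y + t *\<^sub>R axis j 1)) has_real_derivative partial f j (y + t0 *\<^sub>R axis j 1)) (at t0)"
proof -
  let ?z = "y + t0 *\<^sub>R axis j 1"
  have "((\<lambda>t. f (?z + t *\<^sub>R axis j 1)) has_real_derivative partial f j ?z) (at 0)"
    using sm2[OF assms, of ?z j] unfolding partial_def
    by (simp add: DERIV_deriv_iff_real_differentiable)
  moreover have "(\<lambda>t. f (?z + t *\<^sub>R axis j 1)) = (\<lambda>t. (\<lambda>t. f (y + t *\<^sub>R axis j 1)) (t + t0))"
    by (simp add: algebra_simps scaleR_add_left)
  ultimately have "((\<lambda>t. (\<lambda>t. f (y + t *\<^sub>R axis j 1)) (t + t0)) has_real_derivative partial f j ?z) (at 0)"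
    by simp
  thus ?thesis using DERIV_shift[of "\<lambda>t. f (y + t *\<^sub>R axis j 1)" "partial f j ?z" 0 t0] by simp
qed

lemma mvt_any:
  assumes "\<And>t. (\<phi> has_real_derivative \<phi>' t) (at t)"
  shows "\<exists>\<sigma>. \<bar>\<sigma>\<bar> \<le> \<bar>s\<bar> \<and> \<phi> s - \<phi> 0 = s * \<phi>' \<sigma>"
proof (cases "s = 0")
  case True thus ?thesis by auto
next
  case False
  show ?thesis
  proof (cases "0 < s")
    case True
    from MVT2[OF True, of \<phi> \<phi>'] assms obtain z where "0 < z" "z < s" "\<phi> s - \<phi> 0 = (s - 0) * \<phi>' z" by blast
    thus ?thesis by (intro exI[of _ z]) auto
  next
    case f2: False
    hence "s < 0" using False by simp
    from MVT2[OF this, of \<phi> \<phi>'] assms obtain z where "s < z" "z < 0" "\<phi> 0 - \<phi> s = (0 - s) * \<phi>' z" by blast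
    thus ?thesis by (intro exI[of _ z]) (auto simp: algebra_simps)
  qed
qed

lemma mixed_mvt:
  assumes sm: "smooth_fun (f :: real^'n::finite \<Rightarrow> real)"
  shows "\<exists>\<sigma> \<tau>. \<bar>\<sigma>\<bar> \<le> \<bar>s\<bar> \<and> \<bar>\<tau>\<bar> \<le> \<bar>s\<bar> \<and>
    f (x + s *\<^sub>R axis i 1 + s *\<^sub>R axis j 1) - f (x + s *\<^sub>R axis i 1) - f (x + s *\<^sub>R axis j 1) + f x
    = s * s * partial (partial f i) j (x + \<sigma> *\<^sub>R axis i 1 + \<tau> *\<^sub>R axis j 1)"
proof -
  let ?a = "axis i (1::real) :: real^'n" and ?b = "axis j (1::real) :: real^'n"
  define \<phi> where "\<phi> t = f ((x + s *\<^sub>R ?b) + t *\<^sub>R ?a) - f (x + t *\<^sub>R ?a)" for t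
  define \<phi>' where "\<phi>' t = partial f i ((x + s *\<^sub>R ?b) + t *\<^sub>R ?a) - partial f i (x + t *\<^sub>R ?a)" for t
  have d: "(\<phi> has_real_derivative \<phi>' t) (at t)" for t
    unfolding \<phi>_def \<phi>'_def by (intro DERIV_diff dir_deriv[OF sm])
  obtain \<sigma> where \<sigma>: "\<bar>\<sigma>\<bar> \<le> \<bar>s\<bar>" "\<phi> s - \<phi> 0 = s * \<phi>' \<sigma>" using mvt_any[OF d] by blast
  define \<psi> where "\<psi> u = partial f i ((x + \<sigma> *\<^sub>R ?a) + u *\<^sub>R ?b)" for u
  have d2: "(\<psi> has_real_derivative partial (partial f i) j ((x + \<sigma> *\<^sub>R ?a) + u *\<^sub>R ?b)) (at u)" for u
    unfolding \<psi>_def by (rule dir_deriv[OF sm3[OF sm]])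
  obtain \<tau> where \<tau>: "\<bar>\<tau>\<bar> \<le> \<bar>s\<bar>" "\<psi> s - \<psi> 0 = s * partial (partial f i) j ((x + \<sigma> *\<^sub>R ?a) + \<tau> *\<^sub>R ?b)"
    using mvt_any[OF d2] by blast
  have "\<phi>' \<sigma> = \<psi> s - \<psi> 0" unfolding \<phi>'_def \<psi>_def by (simp add: algebra_simps)
  moreover have "\<phi> s - \<phi> 0 = f (x + s *\<^sub>R ?a + s *\<^sub>R ?b) - f (x + s *\<^sub>R ?a) - f (x + s *\<^sub>R ?b) + f x"
    unfolding \<phi>_def by (simp add: algebra_simps)
  ultimately show ?thesis using \<sigma> \<tau> by (intro exI[of _ \<sigma>] exI[of _ \<tau>]) simp
qed

lemma clairaut:
  assumes sm: "smooth_fun (f :: real^'n::finite \<Rightarrow> real)"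
  shows "partial (partial f i) j x = partial (partial f j) i x"
proof (rule ccontr)
  let ?p = "partial (partial f i) j" and ?q = "partial (partial f j) i"
  assume ne: "?p x \<noteq> ?q x"
  define e where "e = \<bar>?p x - ?q x\<bar> / 2"
  have e0: "e > 0" using ne by (simp add: e_def)
  have cp: "continuous (at x) ?p" using sm1[OF sm3[OF sm3[OF sm]]]
    by (simp add: continuous_on_eq_continuous_at)
  have cq: "continuous (at x) ?q" using sm1[OF sm3[OF sm3[OF sm]]]
    by (simp add: continuous_on_eq_continuous_at)
  obtain d1 where d1: "d1 > 0" "\<And>z. dist z x < d1 \<Longrightarrow> dist (?p z) (?p x) < e"
    using cp e0 unfolding continuous_at_eps_delta by blast
  obtain d2 where d2: "d2 > 0" "\<And>z. dist z x < d2 \<Longrightarrow> dist (?q z) (?q x) < e"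
    using cq e0 unfolding continuous_at_eps_delta by blast
  define s where "s = min d1 d2 / 4"
  have s0: "s > 0" using d1 d2 by (simp add: s_def)
  obtain \<sigma> \<tau> where st: "\<bar>\<sigma>\<bar> \<le> \<bar>s\<bar>" "\<bar>\<tau>\<bar> \<le> \<bar>s\<bar>"
    "f (x + s *\<^sub>R axis i 1 + s *\<^sub>R axis j 1) - f (x + s *\<^sub>R axis i 1) - f (x + s *\<^sub>R axis j 1) + f x
    = s * s * ?p (x + \<sigma> *\<^sub>R axis i 1 + \<tau> *\<^sub>R axis j 1)"
    using mixed_mvt[OF sm, of s x i j] by blast
  obtain \<sigma>' \<tau>' where st': "\<bar>\<sigma>'\<bar> \<le> \<bar>s\<bar>" "\<bar>\<tau>'\<bar> \<le> \<bar>s\<bar>"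
    "f (x + s *\<^sub>R axis j 1 + s *\<^sub>R axis i 1) - f (x + s *\<^sub>R axis j 1) - f (x + s *\<^sub>R axis i 1) + f x
    = s * s * ?q (x + \<sigma>' *\<^sub>R axis j 1 + \<tau>' *\<^sub>R axis i 1)"
    using mixed_mvt[OF sm, of s x j i] by blast
  have "x + s *\<^sub>R axis j 1 + s *\<^sub>R axis i 1 = x + s *\<^sub>R axis i 1 + s *\<^sub>R axis j (1::real)"
    by (simp add: algebra_simps)
  note eqx = this
  have "s * s * ?p (x + \<sigma> *\<^sub>R axis i 1 + \<tau> *\<^sub>R axis j 1) = s * s * ?q (x + \<sigma>' *\<^sub>R axis j 1 + \<tau>' *\<^sub>R axis i 1)"
    using st(3) st'(3)[unfolded eqx] by linarith
  hence eq: "?p (x + \<sigma> *\<^sub>R axis i 1 + \<tau> *\<^sub>R axis j 1) = ?q (x + \<sigma>' *\<^sub>R axis j 1 + \<tau>' *\<^sub>R axis i 1)"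
    using s0 by simp
  have nb: "dist (x + a *\<^sub>R axis k 1 + b *\<^sub>R axis l (1::real)) x < d" if "\<bar>a\<bar> \<le> s" "\<bar>b\<bar> \<le> s" "d \<ge> 4 * s"
    for a b :: real and k l :: 'n and d
  proof -
    have "dist (x + a *\<^sub>R axis k 1 + b *\<^sub>R axis l (1::real)) x = norm (a *\<^sub>R axis k (1::real) + b *\<^sub>R axis l 1)"
      by (simp add: dist_norm)
    also have "\<dots> \<le> \<bar>a\<bar> + \<bar>b\<bar>"
      using norm_triangle_ineq[of "a *\<^sub>R axis k (1::real)" "b *\<^sub>R axis l 1"] by simp
    also have "\<dots> < d" using that s0 by linarith
    finally show ?thesis .
  qed
  have "dist (?p (x + \<sigma> *\<^sub>R axis i 1 + \<tau> *\<^sub>R axis j 1)) (?p x) < e"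
    using st s0 by (intro d1(2) nb) (auto simp: s_def)
  moreover have "dist (?q (x + \<sigma>' *\<^sub>R axis j 1 + \<tau>' *\<^sub>R axis i 1)) (?q x) < e"
    using st' s0 by (intro d2(2) nb) (auto simp: s_def)
  ultimately have "\<bar>?p x - ?q x\<bar> < 2 * e" using eq by (simp add: dist_real_def)
  thus False by (simp add: e_def)
qed

lemma hessian_sym: "smooth_fun f \<Longrightarrow> transpose (hessian f x) = hessian f x"
  by (simp add: vec_eq_iff transpose_def hessian_def clairaut)



lemma skew_quad: assumes "transpose M = - (M :: real^'n::finite^'n)" shows "v \<bullet> (M *v v) = 0"
proof -
  have "v \<bullet> (M *v v) = (v v* M) \<bullet> v" by (simp add: dot_lmul_matrix)
  also have "v v* M = transpose M *v v"
    using vector_transpose_matrix[of v "transpose M"] by simp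
  also have "transpose M *v v = - (M *v v)" using assms by (simp add: matrix_vector_mult_def vec_eq_iff sum_negf)
  finally have "v \<bullet> (M *v v) = - ((M *v v) \<bullet> v)" by simp
  thus ?thesis by (simp add: inner_commute)
qed

theorem proposition6p9:
  fixes H :: "real^('m::finite bit0) \<Rightarrow> real"
    and ybar y0 y1 :: "real^('m bit0)"
    and h :: real
  assumes "smooth_fun H"
    and "invertible (symp_S ** hessian H ybar)"
    and "invertible (mat_exp ((h/2) *\<^sub>R (symp_S ** hessian H ybar))
                     + mat_exp (- ((h/2) *\<^sub>R (symp_S ** hessian H ybar))))"
    and "y1 - y0 = ((2::real) *\<^sub>R (matrix_inv (symp_S ** hessian H ybar)
                       ** mat_tanh ((h/2) *\<^sub>R (symp_S ** hessian H ybar))))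
                   *v (symp_S *v sym_dgrad H y0 y1)"
  shows "H y1 = H y0"
proof -
  interpret sympl "symp_S :: real^('m bit0)^('m bit0)"
    by unfold_locales (simp_all add: S_sq S_tr)
  define M where "M = ((2::real) *\<^sub>R (matrix_inv (symp_S ** hessian H ybar)
                       ** mat_tanh ((h/2) *\<^sub>R (symp_S ** hessian H ybar)))) ** symp_S"
  have sk: "transpose M = - M"
    unfolding M_def by (rule main_alg[OF hessian_sym[OF assms(1)] assms(2) assms(3)])
  have "y1 - y0 = M *v sym_dgrad H y0 y1" using assms(4) by (simp add: M_def matrix_vector_mul_assoc)
  hence "H y1 - H y0 = sym_dgrad H y0 y1 \<bullet> (M *v sym_dgrad H y0 y1)" using sdg_inner[of H y0 y1] by simp
  thus ?thesis using skew_quad[OF sk] by simp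
qed

end
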